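(* Let $A$ and $B$ be finite sets of integers with $A\neq\{0\}$ and $B\neq\{0\}$, such that $A\oplus B$ is a complete set of residues modulo $(\#A)(\#B)$. Then at least one of the following holds: (1) no member of $A-A$ is relatively prime to $\#B$; (2) no member of $B-B$ is relatively prime to $\#A$.
   Context: $A-A=\{a_1-a_2:a_1,a_2\in A\}$. $A\oplus B$ denotes the collection $\{a+b\}$ where each element arises uniquely; being a complete set of residues modulo $n$ means the $a+b$ represent each residue class mod $n$ exactly once. *)

theory Defs
  imports Main
begin

definition diffset :: "int set \<Rightarrow> int set" where
  "diffset A = {a1 - a2 | a1 a2. a1 \<in> A \<and> a2 \<in> A}"

definition direct_sum_complete_residues :: "int set \<Rightarrow> int set \<Rightarrow> int \<Rightarrow> bool" where
  "direct_sum_complete_residues A B n \<longleftrightarrow>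
     bij_betw (\<lambda>(a, b). (a + b) mod n) (A \<times> B) {0..<n}"

end

theory Submission
  imports Defs "HOL-Computational_Algebra.Polynomial" "HOL-Computational_Algebra.Primes"
begin

lemma binom_frob:
  fixes x y :: "'a::comm_ring_1"
  assumes p: "prime p"
  shows "\<exists>W. (x + y) ^ p = x ^ p + y ^ p + of_nat p * W"
proof -
  have p0: "p > 0" using p prime_gt_0_nat by blast
  have "(x + y) ^ p = (\<Sum>k\<le>p. of_nat (p choose k) * x ^ k * y ^ (p - k))"
    by (rule binomial_ring)
  also have "{..p} = insert 0 (insert p {1..p-1})" using p0 by auto
  also have "(\<Sum>k\<in>insert 0 (insert p {1..p-1}). of_nat (p choose k) * x ^ k * y ^ (p - k))
     = y ^ p + (x ^ p + (\<Sum>k\<in>{1..p-1}. of_nat (p choose k) * x ^ k * y ^ (p - k)))"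
    using p0 by (simp add: sum.insert)
  also have "(\<Sum>k\<in>{1..p-1}. of_nat (p choose k) * x ^ k * y ^ (p - k))
      = of_nat p * (\<Sum>k\<in>{1..p-1}. of_nat ((p choose k) div p) * x ^ k * y ^ (p - k))"
  proof -
    have "\<And>k. k \<in> {1..p-1} \<Longrightarrow> (p choose k) = p * ((p choose k) div p)"
      using dvd_choose_prime[of _ p] p p0 by auto
    then have "\<And>k. k \<in> {1..p-1} \<Longrightarrow> (of_nat (p choose k) :: 'a) = of_nat p * of_nat ((p choose k) div p)"
      by (metis of_nat_mult)
    then show ?thesis by (simp add: sum_distrib_left mult.assoc)
  qed
  finally show ?thesis by (metis add.assoc add.commute)
qed

lemma sum_frob:
  fixes u :: "'b \<Rightarrow> 'a::comm_ring_1"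
  assumes p: "prime p" and fin: "finite A"
  shows "\<exists>W. (\<Sum>a\<in>A. u a) ^ p = (\<Sum>a\<in>A. u a ^ p) + of_nat p * W"
  using fin
proof (induction A rule: finite_induct)
  case empty
  have "p > 0" using p prime_gt_0_nat by blast
  then show ?case by (auto simp: zero_power intro!: exI[of _ 0])
next
  case (insert x F)
  then obtain W where W: "(\<Sum>a\<in>F. u a) ^ p = (\<Sum>a\<in>F. u a ^ p) + of_nat p * W" by blast
  obtain V where V: "(u x + (\<Sum>a\<in>F. u a)) ^ p = u x ^ p + (\<Sum>a\<in>F. u a) ^ p + of_nat p * V"
    using binom_frob[OF p] by blast
  show ?case using insert.hyps V W
    by (auto simp: algebra_simps intro!: exI[of _ "V + W"])
qed

definition LL :: "'a set \<Rightarrow> nat \<Rightarrow> 'a list set" where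
  "LL A m = {xs. set xs \<subseteq> A \<and> length xs = m}"

lemma LL_finite: "finite A \<Longrightarrow> finite (LL A m)"
  unfolding LL_def by (rule finite_lists_length_eq)

lemma LL_Suc: "LL A (Suc m) = (\<lambda>(xs, a). a # xs) ` (LL A m \<times> A)"
  unfolding LL_def by (rule lists_length_Suc_eq)

lemma card_filter_sum: "finite X \<Longrightarrow> card {x\<in>X. P x} = (\<Sum>x\<in>X. if P x then 1 else 0)"
  by (simp add: sum.inter_filter[symmetric])

lemma sum_LL_Suc:
  fixes F :: "'a list \<Rightarrow> 'c::comm_monoid_add"
  shows "(\<Sum>xs\<in>LL A (Suc m). F xs) = (\<Sum>a\<in>A. \<Sum>xs\<in>LL A m. F (a # xs))"
proof -
  have inj: "inj_on (\<lambda>(xs, a). a # xs) (LL A m \<times> A)" by (auto simp: inj_on_def)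
  have "(\<Sum>xs\<in>LL A (Suc m). F xs) = (\<Sum>(xs,a)\<in>LL A m \<times> A. F (a # xs))"
    unfolding LL_Suc by (subst sum.reindex[OF inj]) (simp add: case_prod_unfold)
  also have "\<dots> = (\<Sum>xs\<in>LL A m. \<Sum>a\<in>A. F (a # xs))"
    by (rule sum.cartesian_product[symmetric])
  also have "\<dots> = (\<Sum>a\<in>A. \<Sum>xs\<in>LL A m. F (a # xs))"
    by (rule sum.swap)
  finally show ?thesis .
qed

lemma power_sum_monom:
  fixes h :: "'a \<Rightarrow> nat"
  shows "(\<Sum>a\<in>A. monom (1::int) (h a)) ^ m = (\<Sum>xs\<in>LL A m. monom 1 (sum_list (map h xs)))"
proof (induction m)
  case 0
  have "LL A 0 = {[]}" by (auto simp: LL_def)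
  then show ?case by simp
next
  case (Suc m)
  have "(\<Sum>a\<in>A. monom (1::int) (h a)) ^ Suc m = (\<Sum>a\<in>A. monom (1::int) (h a)) * (\<Sum>xs\<in>LL A m. monom 1 (sum_list (map h xs)))"
    using Suc by simp
  also have "\<dots> = (\<Sum>a\<in>A. \<Sum>xs\<in>LL A m. monom 1 (sum_list (map h (a # xs))))"
    by (simp add: sum_distrib_left sum_distrib_right mult_monom) (rule sum.swap)
  also have "\<dots> = (\<Sum>xs\<in>LL A (Suc m). monom 1 (sum_list (map h xs)))"
    by (rule sum_LL_Suc[symmetric])
  finally show ?case .
qed

lemma coeff_sum_count:
  fixes \<phi> :: "'b \<Rightarrow> nat"
  assumes "finite S" "finite J"
  shows "(\<Sum>j\<in>J. coeff (\<Sum>s\<in>S. monom (1::int) (\<phi> s)) j) = int (card {s\<in>S. \<phi> s \<in> J})"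
proof -
  have "(\<Sum>j\<in>J. coeff (\<Sum>s\<in>S. monom (1::int) (\<phi> s)) j) = (\<Sum>j\<in>J. \<Sum>s\<in>S. if \<phi> s = j then 1 else 0)"
    by (simp add: coeff_sum coeff_monom)
  also have "\<dots> = (\<Sum>s\<in>S. \<Sum>j\<in>J. if \<phi> s = j then 1 else 0)" by (rule sum.swap)
  also have "\<dots> = (\<Sum>s\<in>S. if \<phi> s \<in> J then 1 else 0)"
    using assms by (simp add: sum.delta)
  also have "\<dots> = int (card {s\<in>S. \<phi> s \<in> J})"
    using assms by (simp add: card_filter_sum of_nat_sum if_distrib cong: if_cong)
  finally show ?thesis .
qed

lemma frob_count:
  fixes h :: "'a \<Rightarrow> nat"
  assumes p: "prime p" and fin: "finite A"
  shows "int (card {xs\<in>LL A p. Q (sum_list (map h xs))}) mod int p = int (card {a\<in>A. Q (p * h a)}) mod int p"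
proof -
  define P where "P = (\<Sum>a\<in>A. monom (1::int) (h a))"
  obtain W where W: "P ^ p = (\<Sum>a\<in>A. monom (1::int) (h a) ^ p) + of_nat p * W"
    using sum_frob[OF p fin] unfolding P_def by blast
  have W2: "(\<Sum>xs\<in>LL A p. monom 1 (sum_list (map h xs))) = (\<Sum>a\<in>A. monom (1::int) (p * h a)) + of_nat p * W"
    using W unfolding P_def power_sum_monom by (simp add: monom_power mult.commute)
  define J where "J = {j \<in> (\<lambda>xs. sum_list (map h xs)) ` LL A p \<union> (\<lambda>a. p * h a) ` A. Q j}"
  have finJ: "finite J" unfolding J_def using LL_finite[OF fin] fin by auto
  have e1: "{xs\<in>LL A p. sum_list (map h xs) \<in> J} = {xs\<in>LL A p. Q (sum_list (map h xs))}"
    unfolding J_def by auto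
  have e2: "{a\<in>A. p * h a \<in> J} = {a\<in>A. Q (p * h a)}"
    unfolding J_def by auto
  have "(\<Sum>j\<in>J. coeff (\<Sum>xs\<in>LL A p. monom 1 (sum_list (map h xs))) j)
      = (\<Sum>j\<in>J. coeff (\<Sum>a\<in>A. monom (1::int) (p * h a)) j) + int p * (\<Sum>j\<in>J. coeff W j)"
    unfolding W2 by (simp add: sum.distrib sum_distrib_left of_nat_poly)
  then have "int (card {xs\<in>LL A p. Q (sum_list (map h xs))}) = int (card {a\<in>A. Q (p * h a)}) + int p * (\<Sum>j\<in>J. coeff W j)"
    using coeff_sum_count[OF LL_finite[OF fin] finJ] coeff_sum_count[OF fin finJ] e1 e2 by simp
  then show ?thesis by simp
qed


lemma bij_fiber:
  assumes "bij_betw F X Y" "y \<in> Y"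
  shows "card {x\<in>X. F x = y} = 1"
proof -
  obtain x where x: "x \<in> X" "F x = y" using assms by (auto simp: bij_betw_def)
  have "{x\<in>X. F x = y} = {x}" using assms(1) x by (auto simp: bij_betw_def inj_on_def)
  then show ?thesis by simp
qed

lemma mod_shift:
  fixes c s r n :: int
  assumes "0 \<le> r" "r < n"
  shows "((c + s) mod n = r) \<longleftrightarrow> (s mod n = (r - c) mod n)"
proof -
  have "((c + s) mod n = r) \<longleftrightarrow> (c + s) mod n = r mod n" using assms by simp
  also have "\<dots> \<longleftrightarrow> s mod n = (r - c) mod n"
    by (simp add: mod_eq_dvd_iff algebra_simps)
  finally show ?thesis .
qed

lemma cardprod:
  assumes "finite X" "finite B"
  shows "card {z\<in>X \<times> B. P (fst z) (snd z)} = (\<Sum>x\<in>X. card {b\<in>B. P x b})"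
proof -
  have "card {z\<in>X \<times> B. P (fst z) (snd z)} = (\<Sum>z\<in>X \<times> B. if P (fst z) (snd z) then 1 else 0)"
    using assms by (simp add: card_filter_sum)
  also have "\<dots> = (\<Sum>x\<in>X. \<Sum>b\<in>B. if P x b then 1 else 0)"
    by (simp add: sum.cartesian_product case_prod_unfold)
  also have "\<dots> = (\<Sum>x\<in>X. card {b\<in>B. P x b})"
    using assms by (simp add: card_filter_sum)
  finally show ?thesis .
qed

lemma cardprod2:
  assumes "finite X" "finite B"
  shows "card {z\<in>X \<times> B. P (fst z) (snd z)} = (\<Sum>b\<in>B. card {x\<in>X. P x b})"
proof -
  have "card {z\<in>X \<times> B. P (fst z) (snd z)} = (\<Sum>z\<in>X \<times> B. if P (fst z) (snd z) then 1 else 0)"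
    using assms by (simp add: card_filter_sum)
  also have "\<dots> = (\<Sum>x\<in>X. \<Sum>b\<in>B. if P x b then 1 else 0)"
    by (simp add: sum.cartesian_product case_prod_unfold)
  also have "\<dots> = (\<Sum>b\<in>B. \<Sum>x\<in>X. if P x b then 1 else 0)"
    by (rule sum.swap)
  also have "\<dots> = (\<Sum>b\<in>B. card {x\<in>X. P x b})"
    using assms by (simp add: card_filter_sum)
  finally show ?thesis .
qed

lemma tcount:
  fixes h :: "'a \<Rightarrow> nat" and g :: "'b \<Rightarrow> int"
  assumes finA: "finite A" and finB: "finite B" and bij: "bij_betw (\<lambda>(a,b). (int (h a) + g b) mod n) (A \<times> B) {0..<n}"
  shows "0 \<le> r \<Longrightarrow> r < n \<Longrightarrow> card {z\<in>LL A (Suc m) \<times> B. (c + int (sum_list (map h (fst z))) + g (snd z)) mod n = r} = card A ^ m"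
proof (induction m arbitrary: c r)
  case 0
  have "card {z\<in>LL A (Suc 0) \<times> B. (c + int (sum_list (map h (fst z))) + g (snd z)) mod n = r}
      = (\<Sum>xs\<in>LL A (Suc 0). card {b\<in>B. (c + int (sum_list (map h xs)) + g b) mod n = r})"
    using cardprod[OF LL_finite[OF finA] finB, where P="\<lambda>xs b. (c + int (sum_list (map h xs)) + g b) mod n = r"] by simp
  also have "\<dots> = (\<Sum>a\<in>A. \<Sum>xs\<in>LL A 0. card {b\<in>B. (c + int (sum_list (map h (a#xs))) + g b) mod n = r})"
    by (rule sum_LL_Suc)
  also have "LL A 0 = {[]}" by (auto simp: LL_def)
  also have "(\<Sum>a\<in>A. \<Sum>xs\<in>{[]}. card {b\<in>B. (c + int (sum_list (map h (a#xs))) + g b) mod n = r})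
      = (\<Sum>a\<in>A. card {b\<in>B. (int (h a) + g b) mod n = (r - c) mod n})"
    using mod_shift[OF 0] by (simp add: add.assoc)
  also have "\<dots> = card {z\<in>A \<times> B. (int (h (fst z)) + g (snd z)) mod n = (r - c) mod n}"
    using cardprod[OF finA finB, where P="\<lambda>a b. (int (h a) + g b) mod n = (r - c) mod n"] by simp
  also have "\<dots> = 1"
  proof -
    have "{z\<in>A \<times> B. (int (h (fst z)) + g (snd z)) mod n = (r - c) mod n}
        = {z\<in>A \<times> B. (\<lambda>(a,b). (int (h a) + g b) mod n) z = (r - c) mod n}"
      by (auto simp: case_prod_unfold)
    moreover have "(r - c) mod n \<in> {0..<n}" using 0 by simp
    ultimately show ?thesis using bij_fiber[OF bij] by simp
  qed
  finally show ?case by simp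
next
  case (Suc m)
  have "card {z\<in>LL A (Suc (Suc m)) \<times> B. (c + int (sum_list (map h (fst z))) + g (snd z)) mod n = r}
      = (\<Sum>xs\<in>LL A (Suc (Suc m)). card {b\<in>B. (c + int (sum_list (map h xs)) + g b) mod n = r})"
    using cardprod[OF LL_finite[OF finA] finB, where P="\<lambda>xs b. (c + int (sum_list (map h xs)) + g b) mod n = r"] by simp
  also have "\<dots> = (\<Sum>a\<in>A. \<Sum>xs\<in>LL A (Suc m). card {b\<in>B. (c + int (sum_list (map h (a#xs))) + g b) mod n = r})"
    by (rule sum_LL_Suc)
  also have "\<dots> = (\<Sum>a\<in>A. card {z\<in>LL A (Suc m) \<times> B. ((c + int (h a)) + int (sum_list (map h (fst z))) + g (snd z)) mod n = r})"
    using cardprod[OF LL_finite[OF finA] finB, where P="\<lambda>xs b. ((c + int (h a)) + int (sum_list (map h xs)) + g b) mod n = r" for a] by (simp add: add.assoc)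
  also have "\<dots> = (\<Sum>a\<in>A. card A ^ m)"
    using Suc by simp
  finally show ?case by simp
qed

lemma core:
  fixes A :: "'a set" and B :: "'b set" and f :: "'a \<Rightarrow> int" and g :: "'b \<Rightarrow> int"
  assumes finA: "finite A" and finB: "finite B" and n: "n = int (card A * card B)" and npos: "n > 0"
    and bij: "bij_betw (\<lambda>(a,b). (f a + g b) mod n) (A \<times> B) {0..<n}"
    and p: "prime p" and pk: "\<not> p dvd card A"
  shows "bij_betw (\<lambda>(a,b). (int p * f a + g b) mod n) (A \<times> B) {0..<n}"
proof -
  define h where "h a = nat (f a mod n)" for a
  have hf: "int (h a) = f a mod n" for a unfolding h_def using npos by simp
  have bij0: "bij_betw (\<lambda>(a,b). (int (h a) + g b) mod n) (A \<times> B) {0..<n}"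
    using bij unfolding hf by (simp add: mod_add_left_eq case_prod_unfold)
  have p0: "p > 0" using p prime_gt_0_nat by blast
  have hit: "\<exists>z\<in>A \<times> B. (\<lambda>(a,b). (int p * f a + g b) mod n) z = r" if r: "0 \<le> r" "r < n" for r
  proof -
    define N where "N = card {z\<in>A \<times> B. (int p * f (fst z) + g (snd z)) mod n = r}"
    have eqf: "(int p * f a + g b) mod n = (int (p * h a) + g b) mod n" for a b
      unfolding of_nat_mult hf by (metis mod_add_left_eq mod_mult_right_eq)
    have "N = (\<Sum>b\<in>B. card {a\<in>A. (int (p * h a) + g b) mod n = r})"
      unfolding N_def eqf using cardprod2[OF finA finB, where P="\<lambda>a b. (int (p * h a) + g b) mod n = r"]
      by simp
    then have "int N mod int p = (\<Sum>b\<in>B. int (card {a\<in>A. (int (p * h a) + g b) mod n = r})) mod int p"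
      by simp
    also have "\<dots> = (\<Sum>b\<in>B. int (card {a\<in>A. (int (p * h a) + g b) mod n = r}) mod int p) mod int p"
      by (simp add: mod_sum_eq)
    also have "\<dots> = (\<Sum>b\<in>B. int (card {xs\<in>LL A p. (int (sum_list (map h xs)) + g b) mod n = r}) mod int p) mod int p"
    proof -
      have "int (card {a\<in>A. (int (p * h a) + g b) mod n = r}) mod int p
          = int (card {xs\<in>LL A p. (int (sum_list (map h xs)) + g b) mod n = r}) mod int p" for b
        using frob_count[OF p finA, of "\<lambda>j. (int j + g b) mod n = r" h] by simp
      then show ?thesis by simp
    qed
    also have "\<dots> = (\<Sum>b\<in>B. int (card {xs\<in>LL A p. (int (sum_list (map h xs)) + g b) mod n = r})) mod int p"
      by (simp add: mod_sum_eq)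
    also have "(\<Sum>b\<in>B. int (card {xs\<in>LL A p. (int (sum_list (map h xs)) + g b) mod n = r}))
        = int (card {z\<in>LL A p \<times> B. (0 + int (sum_list (map h (fst z))) + g (snd z)) mod n = r})"
      using cardprod2[OF LL_finite[OF finA] finB, where P="\<lambda>xs b. (int (sum_list (map h xs)) + g b) mod n = r"]
      by (simp add: of_nat_sum)
    also have "card {z\<in>LL A p \<times> B. (0 + int (sum_list (map h (fst z))) + g (snd z)) mod n = r} = card A ^ (p - 1)"
      using tcount[OF finA finB bij0 r, of "p - 1" 0] p0 by simp
    finally have cong: "int N mod int p = int (card A ^ (p - 1)) mod int p" .
    have "N \<noteq> 0"
    proof
      assume "N = 0"
      then have "int p dvd int (card A ^ (p - 1))" using cong by (simp add: mod_eq_0_iff_dvd)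
      then have "p dvd card A ^ (p - 1)" by presburger
      then have "p dvd card A" using p prime_dvd_power by blast
      then show False using pk by simp
    qed
    then have "{z\<in>A \<times> B. (int p * f (fst z) + g (snd z)) mod n = r} \<noteq> {}" unfolding N_def by (metis card.empty)
    then obtain z where "z \<in> A \<times> B" "(int p * f (fst z) + g (snd z)) mod n = r" by blast
    then show ?thesis by (intro bexI[of _ z]) (auto simp: case_prod_unfold)
  qed
  have sub: "(\<lambda>(a,b). (int p * f a + g b) mod n) ` (A \<times> B) = {0..<n}"
  proof
    show "(\<lambda>(a,b). (int p * f a + g b) mod n) ` (A \<times> B) \<subseteq> {0..<n}" using npos by auto
    show "{0..<n} \<subseteq> (\<lambda>(a,b). (int p * f a + g b) mod n) ` (A \<times> B)"
      using hit by (auto simp: image_def) (metis atLeastLessThan_iff)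
  qed
  have "card (A \<times> B) = card {0..<n}" using n by (simp add: card_cartesian_product flip: of_nat_mult)
  then have "inj_on (\<lambda>(a,b). (int p * f a + g b) mod n) (A \<times> B)"
    using sub by (simp add: inj_on_iff_eq_card finA finB)
  then show ?thesis using sub by (simp add: bij_betw_def)
qed


lemma tmult:
  fixes A :: "'a set" and B :: "'b set" and f :: "'a \<Rightarrow> int" and g :: "'b \<Rightarrow> int"
  assumes finA: "finite A" and finB: "finite B" and n: "n = int (card A * card B)" and npos: "n > 0"
    and bij: "bij_betw (\<lambda>(a,b). (f a + g b) mod n) (A \<times> B) {0..<n}"
  shows "t > 0 \<Longrightarrow> coprime t (card A) \<Longrightarrow> bij_betw (\<lambda>(a,b). (int t * f a + g b) mod n) (A \<times> B) {0..<n}"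
proof (induction t rule: less_induct)
  case (less t)
  show ?case
  proof (cases "t = 1")
    case True
    then show ?thesis using bij by simp
  next
    case False
    obtain p where p: "prime p" "p dvd t" using prime_factor_nat[OF False] by blast
    then obtain t' where t': "t = p * t'" by (auto elim: dvdE)
    have p1: "p > 1" using p prime_gt_1_nat by blast
    have t'pos: "t' > 0" using less.prems t' by (cases t') auto
    have lt: "t' < t" using t' p1 t'pos by simp
    have cop: "coprime t' (card A)" using less.prems(2) t' by simp
    have IH: "bij_betw (\<lambda>(a,b). (int t' * f a + g b) mod n) (A \<times> B) {0..<n}"
      using less.IH[OF lt t'pos cop] .
    have pk: "\<not> p dvd card A"
    proof
      assume "p dvd card A"
      then have "is_unit p" by (rule coprime_common_divisor[OF less.prems(2) p(2)])
      then show False using p(1) by (simp add: not_prime_unit)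
    qed
    have "bij_betw (\<lambda>(a,b). (int p * (int t' * f a) + g b) mod n) (A \<times> B) {0..<n}"
      using core[OF finA finB n npos _ p(1) pk, of "\<lambda>a. int t' * f a" g] IH by simp
    then show ?thesis using t' by (simp add: mult.assoc)
  qed
qed

lemma bij_swap:
  assumes "bij_betw (\<lambda>(a,b). F a b) (A \<times> B) Y"
  shows "bij_betw (\<lambda>(b,a). F a b) (B \<times> A) Y"
proof -
  have "bij_betw prod.swap (B \<times> A) (A \<times> B)" by (auto simp: bij_betw_def inj_on_def product_swap)
  from bij_betw_trans[OF this assms] show ?thesis by (simp add: comp_def case_prod_unfold)
qed

lemma pos_diff:
  fixes A :: "int set"
  assumes "d \<in> diffset A" "d \<noteq> 0" "coprime d c"
  shows "\<exists>a1\<in>A. \<exists>a2\<in>A. a1 - a2 > 0 \<and> coprime (a1 - a2) c"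
proof -
  obtain x y where xy: "x \<in> A" "y \<in> A" "d = x - y" using assms(1) unfolding diffset_def by blast
  show ?thesis
  proof (cases "d > 0")
    case True then show ?thesis using xy assms by blast
  next
    case False
    then have "y - x > 0" using xy assms(2) by simp
    moreover have "coprime (y - x) c" using assms(3) xy
      by (metis coprime_minus_left_iff minus_diff_eq)
    ultimately show ?thesis using xy by blast
  qed
qed

theorem lemma3p2:
  fixes A B :: "int set"
  assumes "finite A" and "finite B"
    and "A \<noteq> {0}" and "B \<noteq> {0}"
    and "direct_sum_complete_residues A B (int (card A * card B))"
  shows "(\<forall>d \<in> diffset A. d \<noteq> 0 \<longrightarrow> \<not> coprime d (int (card B))) \<or>
         (\<forall>d \<in> diffset B. d \<noteq> 0 \<longrightarrow> \<not> coprime d (int (card A)))"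
proof (rule ccontr)
  assume "\<not> ?thesis"
  then obtain d e where d: "d \<in> diffset A" "d \<noteq> 0" "coprime d (int (card B))"
    and e: "e \<in> diffset B" "e \<noteq> 0" "coprime e (int (card A))" by blast
  obtain a1 a2 where a: "a1 \<in> A" "a2 \<in> A" "a1 - a2 > 0" "coprime (a1 - a2) (int (card B))"
    using pos_diff[OF d] by blast
  obtain b1 b2 where b: "b1 \<in> B" "b2 \<in> B" "b1 - b2 > 0" "coprime (b1 - b2) (int (card A))"
    using pos_diff[OF e] by blast
  define n where "n = int (card A * card B)"
  have kpos: "card A > 0" using a assms(1) card_gt_0_iff by blast
  have mpos: "card B > 0" using b assms(2) card_gt_0_iff by blast
  have npos: "n > 0" unfolding n_def using kpos mpos by simp
  define t1 where "t1 = nat (b1 - b2)"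
  define t2 where "t2 = nat (a1 - a2)"
  have t1: "t1 > 0" "coprime t1 (card A)" "int t1 = b1 - b2"
    using b unfolding t1_def by (auto simp flip: coprime_int_iff)
  have t2: "t2 > 0" "coprime t2 (card B)" "int t2 = a1 - a2"
    using a unfolding t2_def by (auto simp flip: coprime_int_iff)
  have bij0: "bij_betw (\<lambda>(a,b). (a + b) mod n) (A \<times> B) {0..<n}"
    using assms(5) unfolding direct_sum_complete_residues_def n_def by simp
  have bij1: "bij_betw (\<lambda>(a,b). (int t1 * a + b) mod n) (A \<times> B) {0..<n}"
    using tmult[OF assms(1,2) n_def npos, of "\<lambda>a. a" "\<lambda>b. b"] bij0 t1(1,2) by simp
  have bij1': "bij_betw (\<lambda>(b,a). (b + int t1 * a) mod n) (B \<times> A) {0..<n}"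
    using bij_swap[OF bij1[unfolded add.commute[of "int t1 * _"]]] by (simp add: add.commute)
  have n': "n = int (card B * card A)" unfolding n_def by simp
  have bij2: "bij_betw (\<lambda>(b,a). (int t2 * b + int t1 * a) mod n) (B \<times> A) {0..<n}"
    using tmult[OF assms(2,1) n' npos, of "\<lambda>b. b" "\<lambda>a. int t1 * a"] bij1' t2(1,2) by simp
  have "(\<lambda>(b,a). (int t2 * b + int t1 * a) mod n) (b2, a1) = (\<lambda>(b,a). (int t2 * b + int t1 * a) mod n) (b1, a2)"
  proof -
    have "int t2 * b2 + int t1 * a1 = int t2 * b1 + int t1 * a2"
      unfolding t1(3) t2(3) by (simp add: algebra_simps)
    then show ?thesis by simp
  qed
  moreover have "(b2, a1) \<noteq> (b1, a2)" using a by auto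
  ultimately show False using bij2 a b unfolding bij_betw_def inj_on_def by blast
qed


end
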